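(* Let $G$ be a finite graph with $n$ vertices given together with an RDV representation (rooted host tree $T$). Let $v_1,\dots,v_n$ be any bottom-up enumeration of the vertices of $G$ with respect to this representation. Then the greedy matching algorithm, run on $G$ with vertex order $v_1,\dots,v_n$, returns a maximum matching of $G$, i.e., a matching of largest possible cardinality.
   Context: An RDV representation of a graph $G$ consists of a rooted tree $T$ (the host tree; its vertices are called nodes) and, for every vertex $v$ of $G$, a downward path $P(v)$ in $T$ (a path that starts at some node and then always proceeds from a node to one of its children), such that for distinct vertices $v,w$, $vw$ is an edge of $G$ if and only if $P(v)$ and $P(w)$ share at least one node. For a vertex $v$, $t(v)$ denotes the node of $P(v)$ closest to the root, and $b(v)$ the node of $P(v)$ farthest from the root. A bottom-up enumeration is an ordering of the vertices of $G$ by non-increasing distance of $t(v)$ from the root of $T$ (ties broken arbitrarily). The greedy matching algorithm with vertex order $v_1,\dots,v_n$: start with $M=\emptyset$; for $i=1,\dots,n$, if $v_i$ is not yet matched (not an endpoint of an edge of $M$) and has at least one unmatched neighbour, then among its unmatched neighbours choose the one $v_j$ with smallest index $j$ and add the edge $v_iv_j$ to $M$; finally return $M$. *)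

theory Defs
  imports Main
begin

definition rooted_tree :: "'n set \<Rightarrow> 'n \<Rightarrow> ('n \<Rightarrow> 'n) \<Rightarrow> bool" where
  "rooted_tree N r par \<longleftrightarrow> finite N \<and> r \<in> N \<and> par r = r \<and>
     (\<forall>x\<in>N. par x \<in> N) \<and> (\<forall>x\<in>N. \<exists>k. (par ^^ k) x = r)"

definition depth :: "'n \<Rightarrow> ('n \<Rightarrow> 'n) \<Rightarrow> 'n \<Rightarrow> nat" where
  "depth r par x = (LEAST k. (par ^^ k) x = r)"

definition downward_path :: "'n set \<Rightarrow> ('n \<Rightarrow> 'n) \<Rightarrow> 'n list \<Rightarrow> bool" where
  "downward_path N par p \<longleftrightarrow> p \<noteq> [] \<and> set p \<subseteq> N \<and>
     (\<forall>i. Suc i < length p \<longrightarrow> par (p ! Suc i) = p ! i \<and> p ! Suc i \<noteq> p ! i)"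

definition rdv_rep :: "'a set \<Rightarrow> ('a \<Rightarrow> 'a \<Rightarrow> bool) \<Rightarrow> 'n set \<Rightarrow> 'n \<Rightarrow> ('n \<Rightarrow> 'n)
    \<Rightarrow> ('a \<Rightarrow> 'n list) \<Rightarrow> bool" where
  "rdv_rep V adj N r par P \<longleftrightarrow> rooted_tree N r par \<and>
     (\<forall>v\<in>V. downward_path N par (P v)) \<and>
     (\<forall>v\<in>V. \<forall>w\<in>V. v \<noteq> w \<longrightarrow> (adj v w \<longleftrightarrow> set (P v) \<inter> set (P w) \<noteq> {}))"

text \<open>t(v) is the top node of P(v), i.e. the head of the list.\<close>
definition bottom_up_enum :: "'a set \<Rightarrow> 'n \<Rightarrow> ('n \<Rightarrow> 'n) \<Rightarrow> ('a \<Rightarrow> 'n list) \<Rightarrow> 'a list \<Rightarrow> bool" where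
  "bottom_up_enum V r par P vs \<longleftrightarrow> distinct vs \<and> set vs = V \<and>
     (\<forall>i j. i < j \<longrightarrow> j < length vs \<longrightarrow>
        depth r par (hd (P (vs ! j))) \<le> depth r par (hd (P (vs ! i))))"

definition is_matching :: "'a set \<Rightarrow> ('a \<Rightarrow> 'a \<Rightarrow> bool) \<Rightarrow> 'a set set \<Rightarrow> bool" where
  "is_matching V adj M \<longleftrightarrow>
     (\<forall>e\<in>M. \<exists>u v. e = {u, v} \<and> u \<in> V \<and> v \<in> V \<and> u \<noteq> v \<and> adj u v) \<and>
     (\<forall>e1\<in>M. \<forall>e2\<in>M. e1 \<noteq> e2 \<longrightarrow> e1 \<inter> e2 = {})"

definition is_max_matching :: "'a set \<Rightarrow> ('a \<Rightarrow> 'a \<Rightarrow> bool) \<Rightarrow> 'a set set \<Rightarrow> bool" where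
  "is_max_matching V adj M \<longleftrightarrow> is_matching V adj M \<and>
     (\<forall>M'. is_matching V adj M' \<longrightarrow> card M' \<le> card M)"

text \<open>Greedy matching. Since the order is a distinct list, the first element of the
  order satisfying the predicate is the unmatched neighbour of smallest index.\<close>
fun greedy_aux :: "('a \<Rightarrow> 'a \<Rightarrow> bool) \<Rightarrow> 'a list \<Rightarrow> 'a list \<Rightarrow> 'a set set \<Rightarrow> 'a set set" where
  "greedy_aux adj order [] M = M"
| "greedy_aux adj order (v # rest) M =
     greedy_aux adj order rest
       (if v \<in> \<Union>M then M
        else (case find (\<lambda>w. w \<noteq> v \<and> adj v w \<and> w \<notin> \<Union>M) order of
                None \<Rightarrow> M
              | Some w \<Rightarrow> insert {v, w} M))"

definition greedy_matching :: "('a \<Rightarrow> 'a \<Rightarrow> bool) \<Rightarrow> 'a list \<Rightarrow> 'a set set" where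
  "greedy_matching adj vs = greedy_aux adj vs vs {}"

end

theory Submission
  imports Defs
begin


lemma depth_rec:
  assumes T: "rooted_tree N r par" and x: "x \<in> N"
  shows "depth r par x = (if x = r then 0 else Suc (depth r par (par x)))"
proof (cases "x = r")
  case True then show ?thesis unfolding depth_def by (simp add: Least_eq_0)
next
  case False
  obtain k where k: "(par ^^ k) x = r" using T x unfolding rooted_tree_def by blast
  have "(LEAST k. (par ^^ k) x = r) = Suc (LEAST m. (par ^^ Suc m) x = r)"
    by (rule Least_Suc[where P="\<lambda>k. (par ^^ k) x = r", OF k]) (use False in simp)
  also have "(\<lambda>m. (par ^^ Suc m) x = r) = (\<lambda>m. (par ^^ m) (par x) = r)"
    by (simp add: funpow_Suc_right del: funpow.simps)
  finally show ?thesis using False unfolding depth_def by simp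
qed

lemma funpow_in:
  assumes T: "rooted_tree N r par" and x: "x \<in> N"
  shows "(par ^^ k) x \<in> N"
  using T x by (induction k) (auto simp: rooted_tree_def)

lemma depth_funpow:
  assumes T: "rooted_tree N r par" and x: "x \<in> N"
  shows "depth r par ((par ^^ k) x) = depth r par x - k"
proof (induction k)
  case 0 then show ?case by simp
next
  case (Suc k)
  define y where "y = (par ^^ k) x"
  have yN: "y \<in> N" using funpow_in[OF T x] y_def by simp
  have "depth r par (par y) = depth r par y - 1"
  proof (cases "y = r")
    case True
    then have "par y = r" using T by (simp add: rooted_tree_def)
    then show ?thesis using True depth_rec[OF T] T by (simp add: rooted_tree_def)
  next
    case False then show ?thesis using depth_rec[OF T yN] by simp
  qed
  then show ?case using Suc y_def by simp
qed

lemma depth0: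
  assumes T: "rooted_tree N r par" and x: "x \<in> N" and "depth r par x = 0"
  shows "x = r"
  using depth_rec[OF T x] assms by (auto split: if_splits)

lemma funpow_fix: "par r = r \<Longrightarrow> (par ^^ k) r = r"
  by (induction k) auto

lemma funpow_depth_r:
  assumes T: "rooted_tree N r par" and x: "x \<in> N" and k: "depth r par x \<le> k"
  shows "(par ^^ k) x = r"
proof -
  obtain k0 where "(par ^^ k0) x = r" using T x unfolding rooted_tree_def by blast
  then have d: "(par ^^ depth r par x) x = r" unfolding depth_def by (rule LeastI)
  have "(par ^^ k) x = (par ^^ (k - depth r par x)) ((par ^^ depth r par x) x)"
    using k by (simp add: funpow_add[symmetric, THEN fun_cong, simplified])
  moreover have "par r = r" using T by (simp add: rooted_tree_def)
  ultimately show ?thesis using d funpow_fix by metis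
qed

lemma anc_unique:
  assumes T: "rooted_tree N r par" and y: "y \<in> N"
    and eq: "depth r par ((par ^^ i) y) = depth r par ((par ^^ j) y)"
  shows "(par ^^ i) y = (par ^^ j) y"
proof -
  have di: "depth r par ((par ^^ i) y) = depth r par y - i" and dj: "depth r par ((par ^^ j) y) = depth r par y - j"
    using depth_funpow[OF T y] by auto
  show ?thesis
  proof (cases "i \<le> depth r par y \<and> j \<le> depth r par y")
    case True then show ?thesis using eq di dj by (metis diff_diff_cancel)
  next
    case False
    then have "(par ^^ i) y = r \<or> (par ^^ j) y = r" using funpow_depth_r[OF T y] by auto
    moreover have "depth r par r = 0" using depth_rec[OF T] T by (simp add: rooted_tree_def)
    ultimately show ?thesis using eq depth0[OF T] funpow_in[OF T y] by metis
  qed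
qed

lemma path_funpow:
  assumes p: "downward_path N par p"
  shows "i + k < length p \<Longrightarrow> (par ^^ k) (p ! (i + k)) = p ! i"
proof (induction k)
  case 0 then show ?case by simp
next
  case (Suc k)
  have "par (p ! Suc (i + k)) = p ! (i + k)" using p Suc.prems unfolding downward_path_def by auto
  then show ?case using Suc by (simp add: funpow_Suc_right del: funpow.simps)
qed

lemma path_depth:
  assumes T: "rooted_tree N r par" and p: "downward_path N par p"
  shows "j < length p \<Longrightarrow> depth r par (p ! j) = depth r par (p ! 0) + j"
proof (induction j)
  case 0 then show ?case by simp
next
  case (Suc j)
  have pr: "par (p ! Suc j) = p ! j" "p ! Suc j \<noteq> p ! j" using p Suc.prems unfolding downward_path_def by auto
  have inN: "p ! Suc j \<in> N" using p Suc.prems unfolding downward_path_def by auto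
  have "p ! Suc j \<noteq> r" using pr T by (auto simp: rooted_tree_def)
  then show ?case using depth_rec[OF T inN] pr Suc by simp
qed

lemma path_up:
  assumes T: "rooted_tree N r par" and p: "downward_path N par p"
    and y: "y \<in> set p" and d: "depth r par (hd p) \<le> depth r par ((par ^^ k) y)"
  shows "(par ^^ k) y \<in> set p"
proof -
  obtain j where j: "j < length p" "y = p ! j" using y by (auto simp: in_set_conv_nth)
  have yN: "y \<in> N" using p y unfolding downward_path_def by auto
  have hd: "hd p = p ! 0" using p unfolding downward_path_def by (simp add: hd_conv_nth)
  have dy: "depth r par y = depth r par (p!0) + j" using path_depth[OF T p j(1)] j by simp
  have dz: "depth r par ((par ^^ k) y) \<le> depth r par y" using depth_funpow[OF T yN] by simp
  define j' where "j' = depth r par ((par ^^ k) y) - depth r par (p!0)"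
  have jj: "j' \<le> j" using dy dz j'_def by simp
  have e: "(par ^^ (j - j')) y = p ! j'" using path_funpow[OF p, of j' "j - j'"] j jj by simp
  have "depth r par (p ! j') = depth r par ((par ^^ k) y)"
    using path_depth[OF T p, of j'] j jj d hd j'_def by simp
  then have "(par ^^ (j - j')) y = (par ^^ k) y" using anc_unique[OF T yN] e by metis
  then show ?thesis using e j jj by (metis nth_mem order.strict_trans1)
qed

lemma path_top:
  assumes p: "downward_path N par p" and y: "y \<in> set p"
  shows "\<exists>k. (par ^^ k) y = hd p"
proof -
  obtain j where j: "j < length p" "y = p ! j" using y by (auto simp: in_set_conv_nth)
  have hd: "hd p = p ! 0" using p unfolding downward_path_def by (simp add: hd_conv_nth)
  show ?thesis using path_funpow[OF p, of 0 j] j hd by auto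
qed

lemma path_comparable:
  assumes p: "downward_path N par p" and y: "y \<in> set p" and z: "z \<in> set p"
  shows "(\<exists>k. (par ^^ k) y = z) \<or> (\<exists>k. (par ^^ k) z = y)"
proof -
  obtain i where i: "i < length p" "y = p ! i" using y by (auto simp: in_set_conv_nth)
  obtain j where j: "j < length p" "z = p ! j" using z by (auto simp: in_set_conv_nth)
  show ?thesis
  proof (cases "i \<le> j")
    case True then show ?thesis using path_funpow[OF p, of i "j - i"] i j by auto
  next
    case False then show ?thesis using path_funpow[OF p, of j "i - j"] i j by auto
  qed
qed

lemma path_hd_le:
  assumes T: "rooted_tree N r par" and p: "downward_path N par p" and y: "y \<in> set p"
  shows "depth r par (hd p) \<le> depth r par y"
proof -
  obtain j where j: "j < length p" "y = p ! j" using y by (auto simp: in_set_conv_nth)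
  have hd: "hd p = p ! 0" using p unfolding downward_path_def by (simp add: hd_conv_nth)
  show ?thesis using path_depth[OF T p j(1)] j hd by simp
qed

lemma meet_top:
  assumes T: "rooted_tree N r par" and pa: "downward_path N par pa" and pb: "downward_path N par pb"
    and m: "set pa \<inter> set pb \<noteq> {}" and d: "depth r par (hd pb) \<le> depth r par (hd pa)"
  shows "hd pa \<in> set pb"
proof -
  obtain y where y: "y \<in> set pa" "y \<in> set pb" using m by blast
  obtain k where k: "(par ^^ k) y = hd pa" using path_top[OF pa y(1)] by blast
  show ?thesis using path_up[OF T pb y(2), of k] k d by simp
qed

lemma geom:
  assumes T: "rooted_tree N r par"
    and pv: "downward_path N par pv" and pu: "downward_path N par pu"
    and pw: "downward_path N par pw" and px: "downward_path N par px"
    and vu: "set pv \<inter> set pu \<noteq> {}" and vw: "set pv \<inter> set pw \<noteq> {}" and wx: "set pw \<inter> set px \<noteq> {}"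
    and uw: "depth r par (hd pu) \<le> depth r par (hd pw)"
    and wv: "depth r par (hd pw) \<le> depth r par (hd pv)"
    and xv: "depth r par (hd px) \<le> depth r par (hd pv)"
  shows "set pu \<inter> set px \<noteq> {}"
proof -
  have tu: "hd pv \<in> set pu" using meet_top[OF T pv pu vu] uw wv by simp
  have tw: "hd pv \<in> set pw" using meet_top[OF T pv pw vw] wv by simp
  obtain z where z: "z \<in> set pw" "z \<in> set px" using wx by blast
  from path_comparable[OF pw tw z(1)] show ?thesis
  proof
    assume "\<exists>k. (par ^^ k) (hd pv) = z"
    then obtain k where k: "(par ^^ k) (hd pv) = z" by blast
    have "depth r par (hd pu) \<le> depth r par z" using uw path_hd_le[OF T pw z(1)] by simp
    then have "z \<in> set pu" using path_up[OF T pu tu, of k] k by simp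
    then show ?thesis using z by blast
  next
    assume "\<exists>k. (par ^^ k) z = hd pv"
    then obtain k where k: "(par ^^ k) z = hd pv" by blast
    have "hd pv \<in> set px" using path_up[OF T px z(2), of k] k xv by simp
    then show ?thesis using tu by blast
  qed
qed



locale rdv_setting =
  fixes V :: "'a set" and adj :: "'a \<Rightarrow> 'a \<Rightarrow> bool"
    and N :: "'n set" and r :: 'n and par :: "'n \<Rightarrow> 'n"
    and P :: "'a \<Rightarrow> 'n list" and vs :: "'a list"
  assumes finV: "finite V"
    and sym: "\<forall>u v. adj u v \<longrightarrow> adj v u"
    and adjV: "\<forall>u v. adj u v \<longrightarrow> u \<in> V \<and> v \<in> V \<and> u \<noteq> v"
    and rep: "rdv_rep V adj N r par P"
    and bu: "bottom_up_enum V r par P vs"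
begin

definition d where "d a = depth r par (hd (P a))"

lemma T: "rooted_tree N r par" using rep by (simp add: rdv_rep_def)
lemma paths: "v \<in> V \<Longrightarrow> downward_path N par (P v)" using rep by (simp add: rdv_rep_def)
lemma adj_iff: "v \<in> V \<Longrightarrow> w \<in> V \<Longrightarrow> v \<noteq> w \<Longrightarrow> adj v w \<longleftrightarrow> set (P v) \<inter> set (P w) \<noteq> {}"
  using rep by (simp add: rdv_rep_def)
lemma dist: "distinct vs" and setvs: "set vs = V" using bu by (auto simp: bottom_up_enum_def)
lemma order: "i < j \<Longrightarrow> j < length vs \<Longrightarrow> d (vs ! j) \<le> d (vs ! i)"
  using bu by (auto simp: bottom_up_enum_def d_def)

lemma adj_u_x:
  assumes "adj v u" "adj v w" "adj w x" "u \<noteq> x"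
    and "d u \<le> d w" "d w \<le> d v" "d x \<le> d v"
  shows "adj u x"
proof -
  have V: "v \<in> V" "u \<in> V" "w \<in> V" "x \<in> V" "v \<noteq> u" "v \<noteq> w" "w \<noteq> x" using assms adjV by auto
  show ?thesis
    using geom[OF T paths[OF V(1)] paths[OF V(2)] paths[OF V(3)] paths[OF V(4)]]
      adj_iff V assms unfolding d_def by auto
qed

lemma later_le:
  assumes vs: "vs = pre @ v # rest" and a: "a \<in> set rest"
  shows "d a \<le> d v"
proof -
  obtain k where k: "k < length rest" "a = rest ! k" using a by (auto simp: in_set_conv_nth)
  have "vs ! (length pre) = v" using vs by simp
  moreover have "vs ! (length pre + Suc k) = a" using vs k by (simp add: nth_append)
  moreover have "length pre + Suc k < length vs" using vs k by simp
  ultimately show ?thesis using order[of "length pre" "length pre + Suc k"] by simp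
qed

lemma matching_fin: "is_matching V adj M \<Longrightarrow> finite M"
proof -
  assume "is_matching V adj M"
  then have "M \<subseteq> Pow V" unfolding is_matching_def by fastforce
  then show ?thesis using finV by (meson finite_Pow_iff finite_subset)
qed

lemma matching_disj: "is_matching V adj M \<Longrightarrow> g1 \<in> M \<Longrightarrow> g2 \<in> M \<Longrightarrow> a \<in> g1 \<Longrightarrow> a \<in> g2 \<Longrightarrow> g1 = g2"
  unfolding is_matching_def by (metis disjoint_iff)

lemma matching_other:
  assumes "is_matching V adj M" "f \<in> M" "a \<in> f" shows "\<exists>b. f = {a, b} \<and> adj a b"
proof -
  obtain x y where xy: "f = {x, y}" "adj x y" using assms unfolding is_matching_def by meson
  show ?thesis
  proof (cases "a = x")
    case True then show ?thesis using xy by blast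
  next
    case False then have "a = y" using xy assms by simp
    then show ?thesis using xy sym by (metis insert_commute)
  qed
qed

lemma matching_nonempty: "is_matching V adj M \<Longrightarrow> f \<in> M \<Longrightarrow> f \<noteq> {}"
  unfolding is_matching_def by fastforce

lemma match1: assumes "adj a b" shows "is_matching V adj {{a, b}}"
proof -
  have "a \<in> V" "b \<in> V" "a \<noteq> b" using adjV assms by auto
  then show ?thesis using assms unfolding is_matching_def by auto
qed

lemma match2: assumes "adj a b" "adj c e" "{a, b} \<inter> {c, e} = {}" shows "is_matching V adj {{a, b}, {c, e}}"
proof -
  have "a \<in> V" "b \<in> V" "a \<noteq> b" "c \<in> V" "e \<in> V" "c \<noteq> e" using adjV assms by auto
  then show ?thesis using assms unfolding is_matching_def by (auto simp: Int_commute)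
qed

lemma exists_max: "\<exists>M. is_max_matching V adj M"
proof -
  define S where "S = {M. is_matching V adj M}"
  have "S \<subseteq> Pow (Pow V)" unfolding S_def is_matching_def by fastforce
  then have fS: "finite S" using finV by (meson finite_Pow_iff finite_subset)
  have "{} \<in> S" unfolding S_def is_matching_def by simp
  then have ne: "card ` S \<noteq> {}" by blast
  have "Max (card ` S) \<in> card ` S" using fS ne by simp
  then obtain M where M: "M \<in> S" "card M = Max (card ` S)" by auto
  have "\<forall>M'\<in>S. card M' \<le> card M" using M fS by simp
  then show ?thesis using M unfolding is_max_matching_def S_def by auto
qed

lemma matching_edge: "is_matching V adj M \<Longrightarrow> e \<in> M \<Longrightarrow> \<exists>u v. e = {u, v} \<and> u \<in> V \<and> v \<in> V \<and> u \<noteq> v \<and> adj u v"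
  unfolding is_matching_def by simp

lemma matching_disj2: "is_matching V adj M \<Longrightarrow> e1 \<in> M \<Longrightarrow> e2 \<in> M \<Longrightarrow> e1 \<noteq> e2 \<Longrightarrow> e1 \<inter> e2 = {}"
  unfolding is_matching_def by simp

lemma exchange:
  assumes Ms: "is_max_matching V adj Ms" and E: "E \<subseteq> Ms" and F: "is_matching V adj F"
    and c: "card E \<le> card F" and g: "\<forall>g\<in>Ms - E. g \<inter> \<Union>F = {}"
  shows "is_max_matching V adj ((Ms - E) \<union> F)"
proof -
  have mMs: "is_matching V adj Ms" using Ms by (simp add: is_max_matching_def)
  have fMs: "finite Ms" by (rule matching_fin[OF mMs])
  have fF: "finite F" by (rule matching_fin[OF F])
  have m1: "\<forall>e\<in>(Ms - E) \<union> F. \<exists>u v. e = {u, v} \<and> u \<in> V \<and> v \<in> V \<and> u \<noteq> v \<and> adj u v"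
  proof
    fix e assume "e \<in> (Ms - E) \<union> F"
    then have "e \<in> Ms \<or> e \<in> F" by blast
    then show "\<exists>u v. e = {u, v} \<and> u \<in> V \<and> v \<in> V \<and> u \<noteq> v \<and> adj u v"
      using matching_edge[OF mMs] matching_edge[OF F] by metis
  qed
  have m2: "\<forall>e1\<in>(Ms - E) \<union> F. \<forall>e2\<in>(Ms - E) \<union> F. e1 \<noteq> e2 \<longrightarrow> e1 \<inter> e2 = {}"
  proof (intro ballI impI)
    fix e1 e2 assume e: "e1 \<in> (Ms - E) \<union> F" "e2 \<in> (Ms - E) \<union> F" "e1 \<noteq> e2"
    show "e1 \<inter> e2 = {}"
    proof (cases "e1 \<in> F")
      case True
      show ?thesis
      proof (cases "e2 \<in> F")
        case True then show ?thesis using \<open>e1 \<in> F\<close> e matching_disj2[OF F] by simp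
      next
        case False then have "e2 \<in> Ms - E" using e by blast
        then have "e2 \<inter> \<Union>F = {}" using g by simp
        then show ?thesis using True by blast
      qed
    next
      case False then have e1: "e1 \<in> Ms - E" using e by blast
      show ?thesis
      proof (cases "e2 \<in> F")
        case True
        have "e1 \<inter> \<Union>F = {}" using g e1 by simp
        then show ?thesis using True by blast
      next
        case False then have "e2 \<in> Ms - E" using e by blast
        then show ?thesis using e1 e matching_disj2[OF mMs] by simp
      qed
    qed
  qed
  have m: "is_matching V adj ((Ms - E) \<union> F)" using m1 m2 unfolding is_matching_def by simp
  have dj: "(Ms - E) \<inter> F = {}"
  proof (rule ccontr)
    assume "(Ms - E) \<inter> F \<noteq> {}"
    then obtain f where "f \<in> Ms - E" "f \<in> F" by blast
    then have "f \<inter> \<Union>F = {}" "f \<noteq> {}" using g matching_nonempty[OF F] by auto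
    then show False using \<open>f \<in> F\<close> by blast
  qed
  have "card ((Ms - E) \<union> F) = card (Ms - E) + card F"
    using card_Un_disjoint[OF _ fF dj] fMs by simp
  moreover have "card (Ms - E) = card Ms - card E" using card_Diff_subset[OF finite_subset[OF E fMs] E] .
  moreover have "card E \<le> card Ms" using card_mono[OF fMs E] .
  ultimately have "card Ms \<le> card ((Ms - E) \<union> F)" using c by simp
  then show ?thesis using m Ms unfolding is_max_matching_def by (meson le_trans)
qed

definition Inv where
  "Inv pre M \<longleftrightarrow> (\<exists>Ms. is_max_matching V adj Ms \<and> M \<subseteq> Ms \<and> (\<forall>e\<in>Ms. e \<inter> set pre \<noteq> {} \<longrightarrow> e \<in> M)) \<and>
     (\<forall>a\<in>set pre. a \<notin> \<Union>M \<longrightarrow> (\<forall>b. adj a b \<longrightarrow> b \<in> \<Union>M))"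

lemma finish:
  assumes Ms: "is_max_matching V adj Ms" and MMs: "M \<subseteq> Ms" and pre: "\<forall>e\<in>Ms. e \<inter> set pre \<noteq> {} \<longrightarrow> e \<in> M"
    and unm: "\<forall>a\<in>set pre. a \<notin> \<Union>M \<longrightarrow> (\<forall>b. adj a b \<longrightarrow> b \<in> \<Union>M)"
    and E: "E \<subseteq> Ms" "E \<inter> M = {}" and F: "is_matching V adj F" "{v, w} \<in> F"
    and c: "card E \<le> card F" and g: "\<forall>g\<in>Ms - E. g \<inter> \<Union>F = {}" and Fp: "\<Union>F \<inter> set pre = {}"
  shows "Inv (pre @ [v]) (insert {v, w} M)"
proof -
  let ?M2 = "(Ms - E) \<union> F"
  have max: "is_max_matching V adj ?M2" by (rule exchange[OF Ms E(1) F(1) c g])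
  have sub: "insert {v, w} M \<subseteq> ?M2" using MMs E F by blast
  have edges: "\<forall>e\<in>?M2. e \<inter> set (pre @ [v]) \<noteq> {} \<longrightarrow> e \<in> insert {v, w} M"
  proof (intro ballI impI)
    fix e assume e: "e \<in> ?M2" "e \<inter> set (pre @ [v]) \<noteq> {}"
    show "e \<in> insert {v, w} M"
    proof (cases "e \<in> F")
      case True
      then have "v \<in> e" using e Fp by auto
      then have "e = {v, w}" using matching_disj[OF F(1) True F(2)] by simp
      then show ?thesis by simp
    next
      case False
      then have "e \<in> Ms - E" using e by blast
      moreover have "v \<in> \<Union>F" using F by blast
      ultimately have "v \<notin> e" using g by blast
      then have "e \<inter> set pre \<noteq> {}" using e by auto
      then show ?thesis using pre \<open>e \<in> Ms - E\<close> by blast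
    qed
  qed
  have unm2: "\<forall>a\<in>set (pre @ [v]). a \<notin> \<Union>(insert {v, w} M) \<longrightarrow> (\<forall>b. adj a b \<longrightarrow> b \<in> \<Union>(insert {v, w} M))"
    using unm by auto
  show ?thesis unfolding Inv_def using max sub edges unm2 by blast
qed


lemma step:
  assumes inv: "Inv pre M" and vs: "vs = pre @ v # rest"
  shows "Inv (pre @ [v]) (if v \<in> \<Union>M then M else (case find (\<lambda>w. w \<noteq> v \<and> adj v w \<and> w \<notin> \<Union>M) vs of None \<Rightarrow> M | Some w \<Rightarrow> insert {v, w} M))"
proof -
  obtain Ms where Ms: "is_max_matching V adj Ms" "M \<subseteq> Ms" and pre: "\<forall>e\<in>Ms. e \<inter> set pre \<noteq> {} \<longrightarrow> e \<in> M"
    and unm: "\<forall>a\<in>set pre. a \<notin> \<Union>M \<longrightarrow> (\<forall>b. adj a b \<longrightarrow> b \<in> \<Union>M)" using inv unfolding Inv_def by blast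
  have mMs: "is_matching V adj Ms" using Ms(1) by (simp add: is_max_matching_def)
  have vpre: "v \<notin> set pre" using dist vs by simp
  have vV: "v \<in> V" using setvs vs by auto
  show ?thesis
  proof (cases "v \<in> \<Union>M")
    case True
    then obtain g where g: "g \<in> M" "v \<in> g" by blast
    have "\<forall>e\<in>Ms. e \<inter> set (pre @ [v]) \<noteq> {} \<longrightarrow> e \<in> M"
    proof (intro ballI impI)
      fix e assume e: "e \<in> Ms" "e \<inter> set (pre @ [v]) \<noteq> {}"
      show "e \<in> M"
      proof (cases "v \<in> e")
        case True then have "e = g" using matching_disj[OF mMs e(1) _ True g(2)] g Ms(2) by blast
        then show ?thesis using g by simp
      next
        case False then have "e \<inter> set pre \<noteq> {}" using e by auto
        then show ?thesis using pre e by blast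
      qed
    qed
    moreover have "\<forall>a\<in>set (pre @ [v]). a \<notin> \<Union>M \<longrightarrow> (\<forall>b. adj a b \<longrightarrow> b \<in> \<Union>M)" using unm True by auto
    ultimately show ?thesis using True Ms unfolding Inv_def by auto
  next
    case False
    note vM = False
    show ?thesis
    proof (cases "find (\<lambda>w. w \<noteq> v \<and> adj v w \<and> w \<notin> \<Union>M) vs")
      case None
      then have noQ: "\<forall>w\<in>set vs. \<not> (w \<noteq> v \<and> adj v w \<and> w \<notin> \<Union>M)" by (simp add: find_None_iff)
      have nb: "\<forall>b. adj v b \<longrightarrow> b \<in> \<Union>M"
      proof (intro allI impI)
        fix b assume b: "adj v b"
        then have "b \<in> set vs" "b \<noteq> v" using adjV setvs by auto
        then show "b \<in> \<Union>M" using noQ b by blast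
      qed
      have nov: "\<forall>e\<in>Ms. v \<notin> e"
      proof (intro ballI notI)
        fix e assume e: "e \<in> Ms" "v \<in> e"
        obtain c where c: "e = {v, c}" "adj v c" using matching_other[OF mMs e] by blast
        then obtain g where g: "g \<in> M" "c \<in> g" using nb by blast
        have "g = e" using matching_disj[OF mMs _ e(1), of g c] g Ms(2) c by blast
        then show False using vM g e by blast
      qed
      have "\<forall>e\<in>Ms. e \<inter> set (pre @ [v]) \<noteq> {} \<longrightarrow> e \<in> M"
      proof (intro ballI impI)
        fix e assume e: "e \<in> Ms" "e \<inter> set (pre @ [v]) \<noteq> {}"
        then have "e \<inter> set pre \<noteq> {}" using nov by auto
        then show "e \<in> M" using pre e by blast
      qed
      moreover have "\<forall>a\<in>set (pre @ [v]). a \<notin> \<Union>M \<longrightarrow> (\<forall>b. adj a b \<longrightarrow> b \<in> \<Union>M)" using unm nb by auto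
      ultimately show ?thesis using vM None Ms unfolding Inv_def by auto
    next
      case (Some w)
      have ex: "\<exists>i<length vs. (vs!i \<noteq> v \<and> adj v (vs!i) \<and> vs!i \<notin> \<Union>M) \<and> w = vs!i \<and> (\<forall>j<i. \<not> (vs ! j \<noteq> v \<and> adj v (vs ! j) \<and> vs ! j \<notin> \<Union>M))"
        using Some unfolding find_Some_iff by simp
      then obtain i where i0: "i < length vs" "vs!i \<noteq> v \<and> adj v (vs!i) \<and> vs!i \<notin> \<Union>M" "w = vs ! i"
        and first: "\<forall>j<i. \<not> (vs ! j \<noteq> v \<and> adj v (vs ! j) \<and> vs ! j \<notin> \<Union>M)"
        by blast
      have i: "i < length vs" "w = vs ! i" "w \<noteq> v" "adj v w" "w \<notin> \<Union>M" using i0 by auto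
      have goal: "?thesis = Inv (pre @ [v]) (insert {v, w} M)" using vM Some by simp
      have wV: "w \<in> V" using i adjV by blast
      have wpre: "w \<notin> set pre"
      proof
        assume wp: "w \<in> set pre"
        have "adj w v" using sym i(4) by blast
        then have "v \<in> \<Union>M" using unm wp i(5) by blast
        then show False using vM by simp
      qed
      have rest_of: "\<And>a. a \<in> V \<Longrightarrow> a \<notin> set pre \<Longrightarrow> a \<noteq> v \<Longrightarrow> d a \<le> d v"
      proof -
        fix a assume a: "a \<in> V" "a \<notin> set pre" "a \<noteq> v"
        then have "a \<in> set rest" using setvs vs by auto
        then show "d a \<le> d v" by (rule later_le[OF vs])
      qed
      have dw: "d w \<le> d v" using rest_of wV wpre i by blast
      have vwpre: "\<Union>{{v, w}} \<inter> set pre = {}" using vpre wpre by auto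
      have fin: "\<And>E F. E \<subseteq> Ms \<Longrightarrow> E \<inter> M = {} \<Longrightarrow> is_matching V adj F \<Longrightarrow> {v, w} \<in> F \<Longrightarrow> card E \<le> card F
          \<Longrightarrow> \<forall>g\<in>Ms - E. g \<inter> \<Union>F = {} \<Longrightarrow> \<Union>F \<inter> set pre = {} \<Longrightarrow> Inv (pre @ [v]) (insert {v, w} M)"
        by (rule finish[OF Ms(1) Ms(2) pre unm])
      have m1: "is_matching V adj {{v, w}}" by (rule match1[OF i(4)])
      show ?thesis unfolding goal
      proof (cases "v \<in> \<Union>Ms")
        case True
        then obtain f where f: "f \<in> Ms" "v \<in> f" by blast
        obtain u where u: "f = {v, u}" "adj v u" using matching_other[OF mMs f] by blast
        have fM: "f \<notin> M" using vM f by blast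
        have onlyf: "\<And>g. g \<in> Ms \<Longrightarrow> v \<in> g \<Longrightarrow> g = f" using matching_disj[OF mMs _ f(1)] f(2) by blast
        show "Inv (pre @ [v]) (insert {v, w} M)"
        proof (cases "u = w")
          case True
          have "\<forall>g\<in>Ms - {f}. g \<inter> \<Union>{{v, w}} = {}"
          proof
            fix g assume g: "g \<in> Ms - {f}"
            have "v \<notin> g" using onlyf g by blast
            moreover have "w \<notin> g" using matching_disj[OF mMs _ f(1), of g w] g u True by blast
            ultimately show "g \<inter> \<Union>{{v, w}} = {}" by auto
          qed
          then show ?thesis using fin[of "{f}" "{{v, w}}"] f fM m1 vwpre by simp
        next
          case False
          note uw = False
          show ?thesis
          proof (cases "w \<in> \<Union>Ms")
            case False
            have "\<forall>g\<in>Ms - {f}. g \<inter> \<Union>{{v, w}} = {}"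
            proof
              fix g assume g: "g \<in> Ms - {f}"
              have "v \<notin> g" using onlyf g by blast
              moreover have "w \<notin> g" using False g by blast
              ultimately show "g \<inter> \<Union>{{v, w}} = {}" by auto
            qed
            then show ?thesis using fin[of "{f}" "{{v, w}}"] f fM m1 vwpre by simp
          next
            case True
            then obtain e where e: "e \<in> Ms" "w \<in> e" by blast
            obtain x where x: "e = {w, x}" "adj w x" using matching_other[OF mMs e] by blast
            have eM: "e \<notin> M" using i(5) e by blast
            have onlye: "\<And>g. g \<in> Ms \<Longrightarrow> w \<in> g \<Longrightarrow> g = e" using matching_disj[OF mMs _ e(1)] e(2) by blast
            have ef: "e \<noteq> f" using e f u uw i(3) by auto
            have uV: "u \<in> V" "x \<in> V" using u x adjV by auto
            have uv: "u \<noteq> v" using u adjV by auto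
            have xv: "x \<noteq> v"
            proof
              assume "x = v"
              then have "v \<in> e" using x by simp
              then show False using onlyf[OF e(1)] ef by simp
            qed
            have xw: "x \<noteq> w" using x adjV by auto
            have ux: "u \<noteq> x"
            proof
              assume "u = x"
              then have "e = f" using matching_disj[OF mMs e(1) f(1), of u] u x by simp
              then show False using ef by simp
            qed
            have uM: "u \<notin> \<Union>M"
            proof
              assume "u \<in> \<Union>M"
              then obtain g where g: "g \<in> M" "u \<in> g" by blast
              then have "g = f" using matching_disj[OF mMs _ f(1), of g u] Ms(2) u by blast
              then show False using fM g by simp
            qed
            have upre: "u \<notin> set pre"
            proof
              assume "u \<in> set pre"
              then have "f \<inter> set pre \<noteq> {}" using u by auto
              then show False using pre f(1) fM by blast
            qed
            have xpre: "x \<notin> set pre"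
            proof
              assume "x \<in> set pre"
              then have "e \<inter> set pre \<noteq> {}" using x by auto
              then show False using pre e(1) eM by blast
            qed
            obtain j where j: "j < length vs" "u = vs ! j" using uV setvs by (metis in_set_conv_nth)
            have "\<not> j < i"
            proof
              assume "j < i"
              then have "\<not> (vs ! j \<noteq> v \<and> adj v (vs ! j) \<and> vs ! j \<notin> \<Union>M)" using first by blast
              then show False using j(2) uv u(2) uM by simp
            qed
            moreover have "j \<noteq> i" using j i uw by auto
            ultimately have "i < j" by simp
            then have du: "d u \<le> d w" using order j i by simp
            have dx: "d x \<le> d v" using rest_of uV xpre xv by blast
            have aux: "adj u x" by (rule adj_u_x[OF u(2) i(4) x(2) ux du dw dx])
            have m2: "is_matching V adj {{v, w}, {u, x}}"
              by (rule match2[OF i(4) aux]) (use uv xv uw xw in auto)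
            have c2: "card {{v, w}, {u, x}} = 2" using uv xv by (auto simp: doubleton_eq_iff)
            have cE: "card {e, f} = 2" using ef by simp
            have gg: "\<forall>g\<in>Ms - {e, f}. g \<inter> \<Union>{{v, w}, {u, x}} = {}"
            proof
              fix g assume g: "g \<in> Ms - {e, f}"
              have "v \<notin> g" using onlyf g by blast
              moreover have "w \<notin> g" using onlye g by blast
              moreover have "u \<notin> g" using matching_disj[OF mMs _ f(1), of g u] g u by blast
              moreover have "x \<notin> g" using matching_disj[OF mMs _ e(1), of g x] g x by blast
              ultimately show "g \<inter> \<Union>{{v, w}, {u, x}} = {}" by auto
            qed
            have "\<Union>{{v, w}, {u, x}} \<inter> set pre = {}" using vpre wpre upre xpre by auto
            then show ?thesis using fin[of "{e, f}" "{{v, w}, {u, x}}"] e f fM eM m2 c2 cE gg by simp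
          qed
        qed
      next
        case False
        note vMs = False
        show "Inv (pre @ [v]) (insert {v, w} M)"
        proof (cases "w \<in> \<Union>Ms")
          case False
          have "\<forall>g\<in>Ms - {}. g \<inter> \<Union>{{v, w}} = {}" using False vMs by blast
          then show ?thesis using fin[of "{}" "{{v, w}}"] m1 vwpre by simp
        next
          case True
          then obtain e where e: "e \<in> Ms" "w \<in> e" by blast
          have eM: "e \<notin> M" using i(5) e by blast
          have "\<forall>g\<in>Ms - {e}. g \<inter> \<Union>{{v, w}} = {}"
          proof
            fix g assume g: "g \<in> Ms - {e}"
            have "v \<notin> g" using vMs g by blast
            moreover have "w \<notin> g" using matching_disj[OF mMs _ e(1), of g w] g e by blast
            ultimately show "g \<inter> \<Union>{{v, w}} = {}" by auto
          qed
          then show ?thesis using fin[of "{e}" "{{v, w}}"] e eM m1 vwpre by simp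
        qed
      qed
    qed
  qed
qed


lemma run: "vs = pre @ rest \<Longrightarrow> Inv pre M \<Longrightarrow> Inv vs (greedy_aux adj vs rest M)"
proof (induction rest arbitrary: pre M)
  case Nil then show ?case by simp
next
  case (Cons v rest)
  have s: "Inv (pre @ [v]) (if v \<in> \<Union>M then M else (case find (\<lambda>w. w \<noteq> v \<and> adj v w \<and> w \<notin> \<Union>M) vs of None \<Rightarrow> M | Some w \<Rightarrow> insert {v, w} M))"
    by (rule step[OF Cons.prems(2) Cons.prems(1)])
  have v: "vs = (pre @ [v]) @ rest" using Cons.prems(1) by simp
  show ?case unfolding greedy_aux.simps(2) by (rule Cons.IH[OF v s])
qed

lemma init: "Inv [] {}" using exists_max unfolding Inv_def by auto

lemma final:
  assumes "Inv vs M" shows "is_max_matching V adj M"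
proof -
  obtain Ms where Ms: "is_max_matching V adj Ms" "M \<subseteq> Ms" and pre: "\<forall>e\<in>Ms. e \<inter> set vs \<noteq> {} \<longrightarrow> e \<in> M"
    using assms unfolding Inv_def by blast
  have mMs: "is_matching V adj Ms" using Ms(1) by (simp add: is_max_matching_def)
  have "Ms \<subseteq> M"
  proof
    fix e assume e: "e \<in> Ms"
    obtain u w where uw: "e = {u, w}" "u \<in> V" using matching_edge[OF mMs e] by blast
    then have "e \<inter> set vs \<noteq> {}" using setvs by auto
    then show "e \<in> M" using pre e by blast
  qed
  then show ?thesis using Ms by (metis subset_antisym)
qed

end

theorem theorem1:
  fixes V :: "'a set" and adj :: "'a \<Rightarrow> 'a \<Rightarrow> bool"
    and N :: "'n set" and r :: 'n and par :: "'n \<Rightarrow> 'n"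
    and P :: "'a \<Rightarrow> 'n list" and vs :: "'a list"
  assumes "finite V"
    and "\<forall>u v. adj u v \<longrightarrow> adj v u"
    and "\<forall>u v. adj u v \<longrightarrow> u \<in> V \<and> v \<in> V \<and> u \<noteq> v"
    and "rdv_rep V adj N r par P"
    and "bottom_up_enum V r par P vs"
  shows "is_max_matching V adj (greedy_matching adj vs)"
proof -
  interpret rdv_setting V adj N r par P vs using assms by unfold_locales
  show ?thesis unfolding greedy_matching_def using final run[of "[]" vs "{}"] init by simp
qed

end
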